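(* Let $M$ be a symmetric homogeneous stable mean having a symmetric asymptotic expansion with coefficients $(a_n)_{n\ge0}$. Then $a_0=1$, $a_1\in\mathbb R$ is arbitrary (free), and for $m\ge2$ $$a_m=\frac{2^{2m-1}}{2^{2m-2}-1}\Big(\frac12\sum_{n=1}^{m-1}a_n\sum_{k=0}^{2m-2n}P[k,2n,\mathbf g]P[2m-2n-k,-2n+1,\mathbf h]+\sum_{n=1}^{m-1}a_n\sum_{k=0}^{m-n}P[k,2n,\mathbf d]P[m-n-k,-2n+1,\mathbf s]\Big),$$ where $\mathbf g=(1,a_1,0,a_2,0,\ldots)$, $\mathbf h=(2,-1,a_1,0,a_2,0,\ldots)$, and $\mathbf d,\mathbf s$ are given by $d_m=-\frac12\sum_{n=0}^m a_n\sum_{k=0}^{2m+1-2n}P[k,2n,\mathbf g]P[2m+1-2n-k,-2n+1,\mathbf h]$ and $s_m=\frac12\sum_{n=0}^m a_n\sum_{k=0}^{2m-2n}P[k,2n,\mathbf g]P[2m-2n-k,-2n+1,\mathbf h]$. In particular all $a_m$, $m\ge2$, are determined by $a_1$ (the right-hand side involves only $a_1,\dots,a_{m-1}$).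
   Context: A bi-variate mean is $M:(0,\infty)^2\to(0,\infty)$ with $\min(s,t)\le M(s,t)\le\max(s,t)$; symmetric: $M(s,t)=M(t,s)$; homogeneous: $M(\lambda s,\lambda t)=\lambda M(s,t)$. $M$ is stable if $M(s,t)=M\big(M(s,M(s,t)),M(M(s,t),t)\big)$ for all $s,t>0$. $M$ has a symmetric asymptotic expansion with coefficients $(a_n)$ if for every fixed real $t$ and every $N\ge0$, $M(x-t,x+t)=\sum_{n=0}^Na_nt^{2n}x^{-2n+1}+o(x^{-2N+1})$ as $x\to\infty$. For a sequence $\mathbf b$ with $b_0\ne0$, $r\in\mathbb R$: $P[0,r,\mathbf b]=b_0^r$, $P[n,r,\mathbf b]=\frac1{nb_0}\sum_{k=1}^n(k(1+r)-n)b_kP[n-k,r,\mathbf b]$ ($n\ge1$), the coefficient of $z^n$ in $(\sum_jb_jz^j)^r$. In $\mathbf g$: $g_0=1$, $g_{2k-1}=a_k$, $g_{2k}=0$; in $\mathbf h$: $h_0=2$, $h_1=-1$, $h_{2k}=a_k$, $h_{2k+1}=0$ ($k\ge1$). *)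

theory Defs
  imports Complex_Main "HOL-Library.Landau_Symbols"
begin

definition is_mean :: "(real \<Rightarrow> real \<Rightarrow> real) \<Rightarrow> bool" where
  "is_mean M \<longleftrightarrow> (\<forall>s>0. \<forall>t>0. min s t \<le> M s t \<and> M s t \<le> max s t)"

definition symmetric_mean :: "(real \<Rightarrow> real \<Rightarrow> real) \<Rightarrow> bool" where
  "symmetric_mean M \<longleftrightarrow> (\<forall>s>0. \<forall>t>0. M s t = M t s)"

definition homogeneous_mean :: "(real \<Rightarrow> real \<Rightarrow> real) \<Rightarrow> bool" where
  "homogeneous_mean M \<longleftrightarrow> (\<forall>c>0. \<forall>s>0. \<forall>t>0. M (c * s) (c * t) = c * M s t)"

definition stable_mean :: "(real \<Rightarrow> real \<Rightarrow> real) \<Rightarrow> bool" where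
  "stable_mean M \<longleftrightarrow> (\<forall>s>0. \<forall>t>0. M s t = M (M s (M s t)) (M (M s t) t))"

definition has_sym_asymp_expansion :: "(real \<Rightarrow> real \<Rightarrow> real) \<Rightarrow> (nat \<Rightarrow> real) \<Rightarrow> bool" where
  "has_sym_asymp_expansion M a \<longleftrightarrow>
     (\<forall>t::real. \<forall>N::nat.
        (\<lambda>x. M (x - t) (x + t) - (\<Sum>n\<le>N. a n * t ^ (2 * n) * x powr (1 - 2 * real n)))
          \<in> o[at_top](\<lambda>x. x powr (1 - 2 * real N)))"

text \<open>P[n,r,b]: coefficient of z^n in (sum_j b_j z^j)^r, via the recursion of the paper.\<close>
function P :: "nat \<Rightarrow> real \<Rightarrow> (nat \<Rightarrow> real) \<Rightarrow> real" where
  "P 0 r b = b 0 powr r"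
| "P (Suc n) r b = (1 / (real (Suc n) * b 0)) *
      (\<Sum>k\<in>{1..Suc n}. (real k * (1 + r) - real (Suc n)) * b k * P (Suc n - k) r b)"
  by pat_completeness auto
termination
  by (relation "measure (\<lambda>(n, _, _). n)") auto

definition seq_g :: "(nat \<Rightarrow> real) \<Rightarrow> nat \<Rightarrow> real" where
  "seq_g a j = (if j = 0 then 1 else if odd j then a ((j + 1) div 2) else 0)"

definition seq_h :: "(nat \<Rightarrow> real) \<Rightarrow> nat \<Rightarrow> real" where
  "seq_h a j = (if j = 0 then 2 else if j = 1 then -1 else if even j then a (j div 2) else 0)"

definition seq_d :: "(nat \<Rightarrow> real) \<Rightarrow> nat \<Rightarrow> real" where
  "seq_d a m = - (1/2) * (\<Sum>n\<le>m. a n * (\<Sum>k\<le>2*m+1-2*n.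
       P k (2 * real n) (seq_g a) * P (2*m+1-2*n-k) (- 2 * real n + 1) (seq_h a)))"

definition seq_s :: "(nat \<Rightarrow> real) \<Rightarrow> nat \<Rightarrow> real" where
  "seq_s a m = (1/2) * (\<Sum>n\<le>m. a n * (\<Sum>k\<le>2*m-2*n.
       P k (2 * real n) (seq_g a) * P (2*m-2*n-k) (- 2 * real n + 1) (seq_h a)))"

end

theory Submission
  imports Defs "HOL-Computational_Algebra.Formal_Power_Series"
begin
unbundle fps_syntax

definition exK :: "nat \<Rightarrow> (real \<Rightarrow> real) \<Rightarrow> real fps \<Rightarrow> bool" where
  "exK K f F \<longleftrightarrow> (\<lambda>u. f u - (\<Sum>k\<le>K. F $ k * u^k)) \<in> o[at_right 0](\<lambda>u. u^K)"

definition ex :: "(real \<Rightarrow> real) \<Rightarrow> real fps \<Rightarrow> bool" where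
  "ex f F \<longleftrightarrow> (\<forall>K. exK K f F)"

lemma ev_pos: "eventually (\<lambda>u::real. u > 0) (at_right 0)"
  by (simp add: eventually_at_right_less)

lemma ev_ne: "eventually (\<lambda>u::real. u ^ K \<noteq> 0) (at_right 0)"
  using ev_pos by eventually_elim simp

lemma pow_smallo: assumes "K < n" shows "(\<lambda>u::real. u^n) \<in> o[at_right 0](\<lambda>u. u^K)"
proof (rule smalloI_tendsto[OF _ ev_ne])
  have "((\<lambda>u::real. u^(n-K)) \<longlongrightarrow> 0^(n-K)) (at_right 0)"
    by (intro tendsto_intros)
  hence "((\<lambda>u::real. u^(n-K)) \<longlongrightarrow> 0) (at_right 0)" using assms by simp
  moreover have "eventually (\<lambda>u::real. u^(n-K) = u^n / u^K) (at_right 0)"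
    using ev_pos by eventually_elim (use assms in \<open>simp add: power_diff\<close>)
  ultimately show "((\<lambda>u::real. u^n / u^K) \<longlongrightarrow> 0) (at_right 0)"
    using tendsto_cong by fastforce
qed

lemma pow_smallo_c: assumes "K < n" shows "(\<lambda>u::real. c * u^n) \<in> o[at_right 0](\<lambda>u. u^K)"
  using pow_smallo[OF assms] by (cases "c = 0") auto

lemma pow_smallo_if: "(\<lambda>u::real. if K < n then c * u^n else 0) \<in> o[at_right 0](\<lambda>u. u^K)"
proof (cases "K < n")
  case True
  have "(\<lambda>u::real. if K < n then c * u^n else 0) = (\<lambda>u. c * u^n)" using True by simp
  thus ?thesis using pow_smallo_c[OF True, of c] by (simp only:)
next
  case False
  have "(\<lambda>u::real. if K < n then c * u^n else 0) = (\<lambda>u. 0)" using False by simp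
  thus ?thesis by (simp only: zero_in_smallo)
qed

lemma smallo_pow_mono: assumes "K \<le> n" "f \<in> o[at_right 0](\<lambda>u::real. u^n)"
  shows "f \<in> o[at_right 0](\<lambda>u. u^K)"
proof (cases "K = n")
  case False
  with assms show ?thesis using landau_o.small_trans pow_smallo by (metis le_neq_implies_less)
qed (use assms in auto)

lemma exK_cong_coeff: assumes "\<And>k. k \<le> K \<Longrightarrow> F $ k = G $ k" "exK K f F" shows "exK K f G"
proof -
  have "(\<Sum>k\<le>K. F $ k * u^k) = (\<Sum>k\<le>K. G $ k * u^k)" for u::real
    using assms(1) by (intro sum.cong) auto
  thus ?thesis using assms(2) unfolding exK_def by simp
qed

lemma exK_cong_fun: assumes "eventually (\<lambda>u. f u = g u) (at_right 0)" "exK K f F" shows "exK K g F"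
  using assms unfolding exK_def
  by (subst (asm) landau_o.small.in_cong[where g="\<lambda>u. g u - (\<Sum>k\<le>K. F $ k * u^k)"])
     (auto elim: eventually_mono)

lemma ex_cong_fun: "eventually (\<lambda>u. f u = g u) (at_right 0) \<Longrightarrow> ex f F \<Longrightarrow> ex g F"
  unfolding ex_def using exK_cong_fun by blast

lemma exK_Suc: assumes "exK (Suc K) f F" shows "exK K f F"
proof -
  have h: "(\<lambda>u. f u - (\<Sum>k\<le>Suc K. F $ k * u^k)) \<in> o[at_right 0](\<lambda>u. u^K)"
    using assms unfolding exK_def by (intro smallo_pow_mono[of K "Suc K"]) auto
  have "(\<lambda>u. (f u - (\<Sum>k\<le>Suc K. F $ k * u^k)) + F $ (Suc K) * u^(Suc K)) \<in> o[at_right 0](\<lambda>u. u^K)"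
    by (rule sum_in_smallo(1)[OF h pow_smallo_c]) simp
  moreover have "(f u - (\<Sum>k\<le>Suc K. F $ k * u^k)) + F $ (Suc K) * u^(Suc K) = f u - (\<Sum>k\<le>K. F $ k * u^k)" for u
    by simp
  ultimately show ?thesis unfolding exK_def by simp
qed

lemma exK_le: assumes "exK n f F" "K \<le> n" shows "exK K f F"
  using assms(2,1) by (induction rule: dec_induct) (auto intro: exK_Suc)


lemma smallo_add: "f \<in> o[F](h) \<Longrightarrow> g \<in> o[F](h) \<Longrightarrow> (\<lambda>x. f x + g x) \<in> o[F](h)"
  by (rule sum_in_smallo(1))
lemma smallo_diff: "f \<in> o[F](h) \<Longrightarrow> g \<in> o[F](h) \<Longrightarrow> (\<lambda>x. f x - g x) \<in> o[F](h)"
  by (rule sum_in_smallo(2))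
lemma bigo_add: "f \<in> O[F](h) \<Longrightarrow> g \<in> O[F](h) \<Longrightarrow> (\<lambda>x. f x + g x) \<in> O[F](h)"
  by (rule sum_in_bigo(1))

lemma ex_exK: "ex f F \<Longrightarrow> exK K f F" unfolding ex_def by blast

lemma ex_monom: "ex (\<lambda>u. c * u^n) (fps_const c * fps_X^n)"
  unfolding ex_def exK_def
proof
  fix K
  have e: "(\<Sum>k\<le>K. (fps_const c * fps_X^n) $ k * u^k) = (if n \<le> K then c * u^n else 0)" for u::real
  proof -
    have "(\<Sum>k\<le>K. (fps_const c * fps_X^n) $ k * u^k) = (\<Sum>k\<le>K. (if k = n then c * u^n else 0))"
      by (intro sum.cong) (auto simp: fps_X_power_nth)
    also have "\<dots> = (if n \<le> K then c * u^n else 0)" by (subst sum.delta) auto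
    finally show ?thesis .
  qed
  show "(\<lambda>u. c * u ^ n - (\<Sum>k\<le>K. (fps_const c * fps_X ^ n) $ k * u ^ k)) \<in> o[at_right 0](\<lambda>u. u ^ K)"
  proof (cases "n \<le> K")
    case True thus ?thesis unfolding e by simp
  next
    case False
    hence "(\<lambda>u::real. c * u^n) \<in> o[at_right 0](\<lambda>u. u^K)" by (intro pow_smallo_c) simp
    thus ?thesis unfolding e using False by simp
  qed
qed

lemma ex_const: "ex (\<lambda>u. c) (fps_const c)"
  using ex_monom[of c 0] by simp

lemma ex_X: "ex (\<lambda>u. u) fps_X"
  using ex_monom[of 1 1] by simp

lemma ex_add: "ex f F \<Longrightarrow> ex g G \<Longrightarrow> ex (\<lambda>u. f u + g u) (F + G)"
  unfolding ex_def exK_def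
proof
  fix K assume a: "\<forall>K. (\<lambda>u. f u - (\<Sum>k\<le>K. F $ k * u ^ k)) \<in> o[at_right 0](\<lambda>u. u ^ K)"
     "\<forall>K. (\<lambda>u. g u - (\<Sum>k\<le>K. G $ k * u ^ k)) \<in> o[at_right 0](\<lambda>u. u ^ K)"
  have "(\<lambda>u. (f u - (\<Sum>k\<le>K. F $ k * u ^ k)) + (g u - (\<Sum>k\<le>K. G $ k * u ^ k))) \<in> o[at_right 0](\<lambda>u. u ^ K)"
    using a by (intro smallo_add) auto
  thus "(\<lambda>u. f u + g u - (\<Sum>k\<le>K. (F + G) $ k * u ^ k)) \<in> o[at_right 0](\<lambda>u. u ^ K)"
    by (simp add: algebra_simps sum.distrib)
qed

lemma ex_minus: "ex f F \<Longrightarrow> ex (\<lambda>u. - f u) (- F)"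
  unfolding ex_def exK_def
proof
  fix K assume a: "\<forall>K. (\<lambda>u. f u - (\<Sum>k\<le>K. F $ k * u ^ k)) \<in> o[at_right 0](\<lambda>u. u ^ K)"
  hence "(\<lambda>u. - (f u - (\<Sum>k\<le>K. F $ k * u ^ k))) \<in> o[at_right 0](\<lambda>u. u ^ K)"
    by (subst landau_o.small.uminus_in_iff) blast
  moreover have "(\<lambda>u. - (f u - (\<Sum>k\<le>K. F $ k * u ^ k))) = (\<lambda>u. - f u - (\<Sum>k\<le>K. (- F) $ k * u ^ k))"
    by (simp add: fun_eq_iff sum_negf)
  ultimately show "(\<lambda>u. - f u - (\<Sum>k\<le>K. (- F) $ k * u ^ k)) \<in> o[at_right 0](\<lambda>u. u ^ K)"
    by simp
qed

lemma ex_diff: "ex f F \<Longrightarrow> ex g G \<Longrightarrow> ex (\<lambda>u. f u - g u) (F - G)"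
  using ex_add[OF _ ex_minus, of f F g G] by simp

lemma ex_sum: "finite A \<Longrightarrow> (\<And>i. i \<in> A \<Longrightarrow> ex (f i) (F i)) \<Longrightarrow> ex (\<lambda>u. \<Sum>i\<in>A. f i u) (\<Sum>i\<in>A. F i)"
proof (induction A rule: finite_induct)
  case empty thus ?case using ex_const[of 0] by simp
next
  case (insert x A) thus ?case by (simp add: ex_add)
qed

lemma ex_bounded: assumes "ex f F" shows "f \<in> O[at_right 0](\<lambda>_. 1)"
proof -
  have "(\<lambda>u. f u - F $ 0) \<in> o[at_right 0](\<lambda>u. 1)"
    using ex_exK[OF assms, of 0] unfolding exK_def by simp
  hence "(\<lambda>u. (f u - F $ 0) + F $ 0) \<in> O[at_right 0](\<lambda>u. 1)"
    by (rule bigo_add[OF landau_o.small_imp_big]) (cases "F $ 0 = 0"; auto)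
  thus ?thesis by simp
qed

lemma ex_tendsto: assumes "ex f F" shows "(f \<longlongrightarrow> F $ 0) (at_right 0)"
proof -
  have "(\<lambda>u. f u - F $ 0) \<in> o[at_right 0](\<lambda>u. 1)"
    using ex_exK[OF assms, of 0] unfolding exK_def by simp
  from smalloD_tendsto[OF this] have "((\<lambda>u. f u - F $ 0) \<longlongrightarrow> 0) (at_right 0)" by simp
  hence "((\<lambda>u. (f u - F $ 0) + F $ 0) \<longlongrightarrow> 0 + F $ 0) (at_right 0)" by (intro tendsto_add tendsto_const)
  thus ?thesis by simp
qed

lemma poly_mult_split:
  fixes u :: real
  shows "(\<Sum>k\<le>K. F $ k * u^k) * (\<Sum>k\<le>K. G $ k * u^k) - (\<Sum>k\<le>K. (F*G) $ k * u^k) =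
    (\<Sum>i\<le>K. \<Sum>j\<le>K. (if K < i+j then F $ i * G $ j * u^(i+j) else 0))"
proof -
  define h where "h = (\<lambda>(i,j). F $ i * G $ j * u^(i+j))"
  have "(\<Sum>k\<le>K. (F*G) $ k * u^k) = (\<Sum>k\<le>K. \<Sum>i\<le>k. h (i, k-i))"
    by (intro sum.cong) (auto simp: fps_mult_nth atLeast0AtMost sum_distrib_right h_def
        intro!: sum.cong simp flip: power_add)
  also have "\<dots> = (\<Sum>p\<in>{(i,j). i+j \<le> K}. h p)"
    using sum.triangle_reindex_eq[of "\<lambda>i j. h (i,j)" K] by (simp add: case_prod_beta')
  also have "{(i,j). i+j \<le> K} = {p \<in> {..K}\<times>{..K}. fst p + snd p \<le> K}" by auto
  also have "sum h \<dots> = (\<Sum>p\<in>{..K}\<times>{..K}. if fst p + snd p \<le> K then h p else 0)"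
    by (rule sum.inter_filter) auto
  finally have A: "(\<Sum>k\<le>K. (F*G) $ k * u^k) = \<dots>" .
  have B: "(\<Sum>k\<le>K. F $ k * u^k) * (\<Sum>k\<le>K. G $ k * u^k) = (\<Sum>p\<in>{..K}\<times>{..K}. h p)"
    by (simp add: sum_product sum.cartesian_product h_def power_add algebra_simps case_prod_beta')
  have C: "(\<Sum>i\<le>K. \<Sum>j\<le>K. (if K < i+j then F $ i * G $ j * u^(i+j) else 0)) =
     (\<Sum>p\<in>{..K}\<times>{..K}. if K < fst p + snd p then h p else 0)"
    by (simp add: sum.cartesian_product) (intro sum.cong, auto simp: h_def)
  have "(\<Sum>p\<in>{..K}\<times>{..K}. h p) = (\<Sum>p\<in>{..K}\<times>{..K}. if fst p + snd p \<le> K then h p else 0)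
      + (\<Sum>p\<in>{..K}\<times>{..K}. if K < fst p + snd p then h p else 0)"
    by (subst sum.distrib[symmetric]) (intro sum.cong, auto)
  thus ?thesis unfolding A B C by linarith
qed

lemma ex_mult: assumes f: "ex f F" and g: "ex g G" shows "ex (\<lambda>u. f u * g u) (F * G)"
  unfolding ex_def exK_def
proof
  fix K
  define pF where "pF = (\<lambda>u::real. \<Sum>k\<le>K. F $ k * u^k)"
  define pG where "pG = (\<lambda>u::real. \<Sum>k\<le>K. G $ k * u^k)"
  have eF: "(\<lambda>u. f u - pF u) \<in> o[at_right 0](\<lambda>u. u^K)" using ex_exK[OF f] unfolding exK_def pF_def by simp
  have eG: "(\<lambda>u. g u - pG u) \<in> o[at_right 0](\<lambda>u. u^K)" using ex_exK[OF g] unfolding exK_def pG_def by simp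
  have bpF: "pF \<in> O[at_right 0](\<lambda>_. 1)"
  proof -
    have "ex pF (\<Sum>k\<le>K. fps_const (F $ k) * fps_X^k)" unfolding pF_def by (rule ex_sum) (auto intro: ex_monom)
    thus ?thesis by (rule ex_bounded)
  qed
  have bg: "g \<in> O[at_right 0](\<lambda>_. 1)" by (rule ex_bounded[OF g])
  have t1: "(\<lambda>u. (f u - pF u) * g u) \<in> o[at_right 0](\<lambda>u. u^K)"
    using landau_o.small_big_mult[OF eF bg] by simp
  have t2: "(\<lambda>u. pF u * (g u - pG u)) \<in> o[at_right 0](\<lambda>u. u^K)"
    using landau_o.big_small_mult[OF bpF eG] by simp
  have t3: "(\<lambda>u. pF u * pG u - (\<Sum>k\<le>K. (F*G) $ k * u^k)) \<in> o[at_right 0](\<lambda>u. u^K)"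
    unfolding pF_def pG_def poly_mult_split
    by (intro big_sum_in_smallo) (rule pow_smallo_if)
  have "(\<lambda>u. (f u - pF u) * g u + pF u * (g u - pG u) + (pF u * pG u - (\<Sum>k\<le>K. (F*G) $ k * u^k)))
     \<in> o[at_right 0](\<lambda>u. u^K)"
    by (intro smallo_add t1 t2 t3)
  thus "(\<lambda>u. f u * g u - (\<Sum>k\<le>K. (F * G) $ k * u ^ k)) \<in> o[at_right 0](\<lambda>u. u ^ K)"
    by (simp add: algebra_simps)
qed

lemma ex_power: "ex f F \<Longrightarrow> ex (\<lambda>u. f u ^ n) (F ^ n)"
  by (induction n) (use ex_const[of 1] in \<open>auto intro: ex_mult\<close>)

lemma ex_cmult: "ex f F \<Longrightarrow> ex (\<lambda>u. c * f u) (fps_const c * F)"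
  using ex_mult[OF ex_const] by blast

lemma ex_inverse: assumes f: "ex f F" and F0: "F $ 0 \<noteq> 0"
  shows "ex (\<lambda>u. inverse (f u)) (inverse F)"
  unfolding ex_def exK_def
proof
  fix K
  define IF where "IF = inverse F"
  define Q where "Q = (\<lambda>u::real. \<Sum>k\<le>K. IF $ k * u^k)"
  define QF where "QF = (\<Sum>k\<le>K. fps_const (IF $ k) * fps_X^k)"
  have exQ: "ex Q QF" unfolding Q_def QF_def by (rule ex_sum) (auto intro: ex_monom)
  have QFc: "QF $ k = IF $ k" if "k \<le> K" for k
  proof -
    have "QF $ k = (\<Sum>i\<le>K. if k = i then IF $ i else 0)"
      unfolding QF_def fps_sum_nth by (intro sum.cong) (auto simp: fps_X_power_nth)
    also have "\<dots> = IF $ k" using that by (simp add: sum.delta)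
    finally show ?thesis .
  qed
  have ex1: "exK K (\<lambda>u. f u * Q u) (F * QF)" by (rule ex_exK[OF ex_mult[OF f exQ]])
  have "(F * QF) $ k = (1::real fps) $ k" if "k \<le> K" for k
  proof -
    have "(F * QF) $ k = (F * IF) $ k"
      unfolding fps_mult_nth using that by (intro sum.cong) (auto simp: QFc)
    thus ?thesis using F0 by (simp add: IF_def inverse_mult_eq_1')
  qed
  from exK_cong_coeff[OF this ex1]
  have "exK K (\<lambda>u. f u * Q u) 1" by blast
  hence e0: "(\<lambda>u. f u * Q u - (\<Sum>k\<le>K. (1::real fps) $ k * u^k)) \<in> o[at_right 0](\<lambda>u. u^K)"
    unfolding exK_def .
  have one: "(\<Sum>k\<le>K. (1::real fps) $ k * u^k) = 1" for u::real
  proof -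
    have "(\<Sum>k\<le>K. (1::real fps) $ k * u^k) = (\<Sum>k\<le>K. if k = 0 then 1 else 0)"
      by (intro sum.cong) auto
    also have "\<dots> = 1" by (simp add: sum.delta)
    finally show ?thesis .
  qed
  have e1: "(\<lambda>u. f u * Q u - 1) \<in> o[at_right 0](\<lambda>u. u^K)" using e0 by (simp only: one)
  have tf: "(f \<longlongrightarrow> F $ 0) (at_right 0)" by (rule ex_tendsto[OF f])
  have nz: "eventually (\<lambda>u. f u \<noteq> 0) (at_right 0)" using tendsto_imp_eventually_ne[OF tf F0] .
  have "((\<lambda>u. inverse (f u)) \<longlongrightarrow> inverse (F $ 0)) (at_right 0)" using tf F0 by (intro tendsto_intros)
  hence bi: "(\<lambda>u. inverse (f u)) \<in> O[at_right 0](\<lambda>_. 1)"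
    by (intro bigoI_tendsto[where c="inverse (F $ 0)"]) auto
  have "(\<lambda>u. inverse (f u) * (f u * Q u - 1)) \<in> o[at_right 0](\<lambda>u. u^K)"
    using landau_o.big_small_mult[OF bi e1] by simp
  hence h1: "(\<lambda>u. - (inverse (f u) * (f u * Q u - 1))) \<in> o[at_right 0](\<lambda>u. u^K)"
    by (subst landau_o.small.uminus_in_iff)
  have ev: "eventually (\<lambda>u. - (inverse (f u) * (f u * Q u - 1)) = inverse (f u) - Q u) (at_right 0)"
    using nz by eventually_elim (simp add: algebra_simps)
  have "(\<lambda>u. inverse (f u) - Q u) \<in> o[at_right 0](\<lambda>u. u^K)"
    using landau_o.small.in_cong[OF ev] h1 by simp
  thus "(\<lambda>u. inverse (f u) - (\<Sum>k\<le>K. inverse F $ k * u ^ k)) \<in> o[at_right 0](\<lambda>u. u ^ K)"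
    unfolding Q_def IF_def .
qed

lemma ex_unique: assumes "ex f F" "ex f G" shows "F = G"
proof (rule ccontr)
  assume "F \<noteq> G"
  then obtain j where j: "F $ j \<noteq> G $ j" by (auto simp: fps_eq_iff)
  define m where "m = (LEAST j. F $ j \<noteq> G $ j)"
  have m: "F $ m \<noteq> G $ m" unfolding m_def by (rule LeastI[of _ j]) (use j in auto)
  have lt: "F $ k = G $ k" if "k < m" for k using not_less_Least[OF that[unfolded m_def]] by blast
  have "(\<lambda>u. (f u - (\<Sum>k\<le>m. G $ k * u^k)) - (f u - (\<Sum>k\<le>m. F $ k * u^k))) \<in> o[at_right 0](\<lambda>u. u^m)"
    using ex_exK[OF assms(2), of m] ex_exK[OF assms(1), of m] unfolding exK_def
    by (rule smallo_diff)
  moreover have "(f u - (\<Sum>k\<le>m. G $ k * u^k)) - (f u - (\<Sum>k\<le>m. F $ k * u^k)) = (F $ m - G $ m) * u^m" for u::real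
  proof -
    have "(\<Sum>k\<le>m. F $ k * u^k) - (\<Sum>k\<le>m. G $ k * u^k) = (\<Sum>k\<le>m. (F $ k - G $ k) * u^k)"
      by (simp add: sum_subtractf algebra_simps)
    also have "\<dots> = (\<Sum>k\<in>{m}. (F $ k - G $ k) * u^k)"
      by (intro sum.mono_neutral_right) (auto simp: lt)
    finally show ?thesis by simp
  qed
  ultimately have "(\<lambda>u::real. (F $ m - G $ m) * u^m) \<in> o[at_right 0](\<lambda>u. u^m)" by simp
  hence "(\<lambda>u::real. u^m) \<in> o[at_right 0](\<lambda>u. u^m)" using m by simp
  hence "eventually (\<lambda>u::real. u^m = 0) (at_right 0)" by (simp add: landau_o.small_refl_iff)
  moreover have "eventually (\<lambda>u::real. u^m \<noteq> 0) (at_right 0)" by (rule ev_ne)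
  ultimately have "eventually (\<lambda>u::real. False) (at_right 0)" by eventually_elim auto
  thus False by simp
qed


definition pw :: "real fps \<Rightarrow> int \<Rightarrow> real fps" where
  "pw B r = (if r \<ge> 0 then B ^ nat r else inverse B ^ nat (-r))"

lemma pw_deriv:
  assumes B0: "B $ 0 \<noteq> 0"
  shows "B * fps_deriv (pw B r) = fps_const (of_int r) * pw B r * fps_deriv B"
proof (cases "r \<ge> 0")
  case True
  define N where "N = nat r"
  have r: "r = int N" using True N_def by simp
  show ?thesis
  proof (cases N)
    case 0 thus ?thesis using r by (simp add: pw_def)
  next
    case (Suc M)
    have pwN: "pw B r = B ^ N" using True by (simp add: pw_def N_def)
    have "fps_deriv (B ^ N) = of_nat N * fps_deriv B * B ^ (N - 1)" by (rule fps_deriv_power')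
    hence "B * fps_deriv (pw B r) = B * (of_nat N * fps_deriv B * B ^ M)"
      using Suc by (simp only: pwN) simp
    also have "\<dots> = of_nat N * B ^ N * fps_deriv B" using Suc by (simp add: algebra_simps)
    also have "of_nat N = fps_const (of_int r)" using r by (simp add: fps_of_nat)
    finally show ?thesis using True by (simp add: pw_def N_def)
  qed
next
  case False
  define N where "N = nat (-r)"
  have r: "r = - int N" and N1: "N \<ge> 1" using False N_def by auto
  then obtain M where M: "N = Suc M" by (cases N) auto
  define IB where "IB = inverse B"
  have BI: "B * IB = 1" unfolding IB_def using B0 by (rule inverse_mult_eq_1')
  have pwN: "pw B r = IB ^ N" using False by (simp add: pw_def N_def IB_def)
  have "fps_deriv (IB ^ N) = of_nat N * fps_deriv IB * IB ^ (N - 1)" by (rule fps_deriv_power')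
  hence "B * fps_deriv (pw B r) = B * (of_nat N * fps_deriv IB * IB ^ M)"
    using M by (simp only: pwN) simp
  also have "fps_deriv IB = - fps_deriv B * IB\<^sup>2" unfolding IB_def using B0 by (rule fps_inverse_deriv)
  also have "B * (of_nat N * (- fps_deriv B * IB\<^sup>2) * IB ^ M) = - of_nat N * (B * IB) * IB ^ N * fps_deriv B"
    using M by (simp add: algebra_simps power2_eq_square)
  also have "\<dots> = - of_nat N * IB ^ N * fps_deriv B" by (simp add: BI)
  also have "- (of_nat N :: real fps) = fps_const (of_int r)" using r by (simp add: fps_of_nat fps_const_neg[symmetric])
  finally show ?thesis using False by (simp add: pw_def N_def IB_def)
qed

lemma pw_0: assumes "B $ 0 > 0" shows "pw B r $ 0 = (B $ 0) powr (of_int r)"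
proof (cases "r \<ge> 0")
  case True
  hence "pw B r $ 0 = (B $ 0) ^ nat r" by (simp add: pw_def fps_nth_power_0)
  also have "\<dots> = (B $ 0) powr (of_int r)" using assms True by (simp add: powr_realpow[symmetric])
  finally show ?thesis .
next
  case False
  hence "pw B r $ 0 = inverse (B $ 0) ^ nat (-r)" by (simp add: pw_def fps_nth_power_0)
  also have "\<dots> = (B $ 0) powr (of_int r)" using assms False
    by (simp add: powr_realpow[symmetric] powr_minus[symmetric] power_inverse powr_realpow)
  finally show ?thesis .
qed

lemma pw_rec:
  assumes B0: "B $ 0 \<noteq> 0" and n: "n \<ge> 1"
  shows "real n * B $ 0 * pw B r $ n =
    (\<Sum>k\<in>{1..n}. (real k * (1 + of_int r) - real n) * B $ k * pw B r $ (n - k))"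
proof -
  define F where "F = pw B r"
  have id: "B * (fps_X * fps_deriv F) = fps_const (of_int r) * F * (fps_X * fps_deriv B)"
    using pw_deriv[OF B0, of r] unfolding F_def by (metis mult.assoc mult.left_commute)
  have dx: "(fps_X * fps_deriv G) $ j = real j * G $ j" for G :: "real fps" and j
    by (cases j) (auto simp: algebra_simps)
  have L: "(B * (fps_X * fps_deriv F)) $ n = (\<Sum>k=0..n. B $ k * (real (n - k) * F $ (n - k)))"
    by (simp only: fps_mult_nth[of B] dx)
  have R: "(fps_const (of_int r) * F * (fps_X * fps_deriv B)) $ n =
      (\<Sum>k=0..n. of_int r * (real k * B $ k) * F $ (n - k))"
  proof -
    have "(fps_const (of_int r) * F * (fps_X * fps_deriv B)) $ n
        = (fps_const (of_int r) * ((fps_X * fps_deriv B) * F)) $ n" by (simp only: ac_simps)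
    also have "\<dots> = of_int r * (((fps_X * fps_deriv B) * F) $ n)" by (rule fps_mult_left_const_nth)
    also have "\<dots> = of_int r * (\<Sum>k=0..n. (real k * B $ k) * F $ (n - k))" by (simp only: fps_mult_nth[of "fps_X * fps_deriv B"] dx)
    finally show ?thesis by (simp add: sum_distrib_left mult.assoc)
  qed
  have eq: "(\<Sum>k=0..n. B $ k * (real (n - k) * F $ (n - k))) = (\<Sum>k=0..n. of_int r * (real k * B $ k) * F $ (n - k))"
  proof -
    have "(B * (fps_X * fps_deriv F)) $ n = (fps_const (of_int r) * F * (fps_X * fps_deriv B)) $ n"
      by (simp only: id)
    thus ?thesis unfolding L R .
  qed
  have s1: "(\<Sum>k=0..n. B $ k * (real (n - k) * F $ (n - k))) = B $ 0 * (real n * F $ n) + (\<Sum>k\<in>{1..n}. B $ k * (real (n - k) * F $ (n - k)))"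
    by (subst sum.atLeast_Suc_atMost) auto
  have s2: "(\<Sum>k=0..n. of_int r * (real k * B $ k) * F $ (n - k)) = (\<Sum>k\<in>{1..n}. of_int r * (real k * B $ k) * F $ (n - k))"
    by (subst sum.atLeast_Suc_atMost) auto
  have "real n * B $ 0 * F $ n = (\<Sum>k\<in>{1..n}. of_int r * (real k * B $ k) * F $ (n - k)) - (\<Sum>k\<in>{1..n}. B $ k * (real (n - k) * F $ (n - k)))"
    using eq s1 s2 by (simp add: algebra_simps)
  also have "\<dots> = (\<Sum>k\<in>{1..n}. (real k * (1 + of_int r) - real n) * B $ k * F $ (n - k))"
    by (subst sum_subtractf[symmetric]) (intro sum.cong refl, auto simp: algebra_simps of_nat_diff)
  finally show ?thesis unfolding F_def .
qed

lemma P_pw: assumes b0: "b 0 > 0" shows "P n (of_int r) b = pw (Abs_fps b) r $ n"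
proof (induction n rule: less_induct)
  case (less n)
  show ?case
  proof (cases n)
    case 0 thus ?thesis using pw_0[of "Abs_fps b" r] b0 by simp
  next
    case (Suc m)
    have "P n (of_int r) b = (1 / (real n * b 0)) *
      (\<Sum>k\<in>{1..n}. (real k * (1 + of_int r) - real n) * b k * P (n - k) (of_int r) b)"
      using Suc by simp
    also have "\<dots> = (1 / (real n * b 0)) *
      (\<Sum>k\<in>{1..n}. (real k * (1 + of_int r) - real n) * b k * pw (Abs_fps b) r $ (n - k))"
      using less Suc by (intro arg_cong2[where f="(*)"] sum.cong refl) auto
    also have "\<dots> = (1 / (real n * b 0)) * (real n * b 0 * pw (Abs_fps b) r $ n)"
      using pw_rec[of "Abs_fps b" n r] b0 Suc by simp
    also have "\<dots> = pw (Abs_fps b) r $ n" using b0 Suc by simp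
    finally show ?thesis .
  qed
qed


lemma shift_fact: "(D::real fps) $ 0 = 0 \<Longrightarrow> D = fps_X * fps_shift 1 D"
proof (intro fps_ext)
  fix n assume "D $ 0 = 0"
  thus "D $ n = (fps_X * fps_shift 1 D) $ n" by (cases n) auto
qed

lemma pow_low_zero:
  assumes "(D::real fps) $ 0 = 0" "k < m" shows "(D ^ m * E) $ k = 0"
proof -
  have eq: "D ^ m * E = fps_X ^ m * (fps_shift 1 D ^ m * E)"
    by (subst shift_fact[OF assms(1)]) (simp only: power_mult_distrib mult.assoc)
  show ?thesis unfolding eq fps_X_power_mult_nth using assms(2) by simp
qed

lemma Mgen:
  fixes M :: "real \<Rightarrow> real \<Rightarrow> real" and a :: "nat \<Rightarrow> real"
  assumes hom: "homogeneous_mean M"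
  and hyp: "\<And>N. (\<lambda>v. M (1-v) (1+v) - (\<Sum>n\<le>N. a n * v^(2*n))) \<in> o[at_right 0](\<lambda>v. v^(2*N))"
  and pos: "eventually (\<lambda>u. p u > 0 \<and> q u > 0) (at_right 0)"
  and exD: "ex (\<lambda>u. (q u - p u)/2) D" and exC: "ex (\<lambda>u. (q u + p u)/2) C"
  and D0: "D $ 0 = 0" and D1: "D $ 1 > 0" and C0: "C $ 0 > 0"
  shows "ex (\<lambda>u. M (p u) (q u)) (Abs_fps (\<lambda>k. \<Sum>n\<le>k. a n * (D^(2*n) * C * inverse C ^(2*n)) $ k))"
proof -
  define d where "d = (\<lambda>u. (q u - p u)/2)"
  define c where "c = (\<lambda>u. (q u + p u)/2)"
  define w where "w = (\<lambda>u. d u * inverse (c u))"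
  define W where "W = D * inverse C"
  have exd: "ex d D" using exD unfolding d_def .
  have exc: "ex c C" using exC unfolding c_def .
  have exw: "ex w W" unfolding w_def W_def using exd ex_inverse[OF exc] C0 by (intro ex_mult) auto
  have W0: "W $ 0 = 0" using D0 by (simp add: W_def)
  have W1: "W $ 1 = D $ 1 / C $ 0"
    using D0 C0 by (simp add: W_def fps_mult_nth field_simps)
  have W1pos: "W $ 1 > 0" using W1 D1 C0 by simp
  have "(\<lambda>u. w u - (\<Sum>k\<le>1. W $ k * u^k)) \<in> o[at_right 0](\<lambda>u. u^1)"
    using ex_exK[OF exw, of 1] unfolding exK_def .
  hence "(\<lambda>u. w u - W $ 1 * u) \<in> o[at_right 0](\<lambda>u. u)" using W0 by simp
  from smalloD_tendsto[OF this] have "((\<lambda>u. (w u - W $ 1 * u) / u) \<longlongrightarrow> 0) (at_right 0)" .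
  hence "((\<lambda>u. (w u - W $ 1 * u) / u + W $ 1) \<longlongrightarrow> 0 + W $ 1) (at_right 0)"
    by (intro tendsto_add tendsto_const)
  moreover have "eventually (\<lambda>u. (w u - W $ 1 * u) / u + W $ 1 = w u / u) (at_right 0)"
    using ev_pos by eventually_elim (simp add: field_simps)
  ultimately have wq: "((\<lambda>u. w u / u) \<longlongrightarrow> W $ 1) (at_right 0)"
    using tendsto_cong by fastforce
  have wpos: "eventually (\<lambda>u. w u > 0) (at_right 0)"
  proof -
    have "eventually (\<lambda>u. w u / u > 0) (at_right 0)"
      using order_tendstoD(1)[OF wq W1pos] .
    thus ?thesis using ev_pos by eventually_elim (simp add: zero_less_divide_iff)
  qed
  have wO: "w \<in> O[at_right 0](\<lambda>u. u)"
    by (rule bigoI_tendsto[OF wq]) (use ev_pos in \<open>auto elim: eventually_mono\<close>)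
  have wt: "(w \<longlongrightarrow> 0) (at_right 0)"
  proof -
    have "((\<lambda>u. w u / u * u) \<longlongrightarrow> W $ 1 * 0) (at_right 0)"
      by (intro tendsto_mult wq) (simp add: tendsto_ident_at)
    moreover have "eventually (\<lambda>u. w u / u * u = w u) (at_right 0)"
      using ev_pos by eventually_elim simp
    ultimately show ?thesis using tendsto_cong by fastforce
  qed
  have wlim: "filterlim w (at_right 0) (at_right 0)"
    by (rule tendsto_imp_filterlim_at_right[OF wt wpos])
  have cb: "c \<in> O[at_right 0](\<lambda>_. 1)" by (rule ex_bounded[OF exc])
  show ?thesis unfolding ex_def
  proof
    fix K
    define S where "S = (\<Sum>n\<le>K. fps_const (a n) * (D^(2*n) * C * inverse C ^(2*n)))"
    define s where "s = (\<lambda>u. \<Sum>n\<le>K. a n * (d u ^(2*n) * c u * inverse (c u) ^(2*n)))"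
    have exs: "ex s S" unfolding s_def S_def
      by (intro ex_sum ex_cmult ex_mult ex_power ex_inverse exd exc) (use C0 in auto)
    have h1: "(\<lambda>u. M (1 - w u) (1 + w u) - (\<Sum>n\<le>K. a n * w u^(2*n))) \<in> o[at_right 0](\<lambda>u. w u^(2*K))"
      by (rule landau_o.small.compose[OF hyp wlim])
    have "(\<lambda>u. w u ^ (2*K)) \<in> O[at_right 0](\<lambda>u. u ^ (2*K))"
      by (rule landau_o.big_power[OF wO])
    from landau_o.small_big_trans[OF h1 this]
    have h2: "(\<lambda>u. M (1 - w u) (1 + w u) - (\<Sum>n\<le>K. a n * w u^(2*n))) \<in> o[at_right 0](\<lambda>u. u^K)"
      by (rule smallo_pow_mono[rotated]) simp
    have h3: "(\<lambda>u. c u * (M (1 - w u) (1 + w u) - (\<Sum>n\<le>K. a n * w u^(2*n)))) \<in> o[at_right 0](\<lambda>u. u^K)"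
      using landau_o.big_small_mult[OF cb h2] by simp
    have ev: "eventually (\<lambda>u. c u * (M (1 - w u) (1 + w u) - (\<Sum>n\<le>K. a n * w u^(2*n)))
        = M (p u) (q u) - s u) (at_right 0)"
      using pos
    proof eventually_elim
      case (elim u)
      hence cpos: "c u > 0" by (simp add: c_def)
      have e1: "c u * (1 - w u) = p u" and e2: "c u * (1 + w u) = q u"
        using cpos by (simp_all add: w_def c_def d_def field_simps)
      have "1 - w u > 0" "1 + w u > 0"
        using e1 e2 elim cpos by (metis zero_less_mult_pos)+
      hence "M (p u) (q u) = c u * M (1 - w u) (1 + w u)"
        using hom cpos unfolding homogeneous_mean_def e1[symmetric] e2[symmetric] by blast
      moreover have "c u * (\<Sum>n\<le>K. a n * w u^(2*n)) = s u"
        unfolding s_def w_def sum_distrib_left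
        by (intro sum.cong refl) (simp add: power_mult_distrib mult_ac)
      ultimately show ?case by (simp add: algebra_simps)
    qed
    have h4: "(\<lambda>u. M (p u) (q u) - s u) \<in> o[at_right 0](\<lambda>u. u^K)"
      using landau_o.small.in_cong[OF ev] h3 by simp
    have h5: "(\<lambda>u. s u - (\<Sum>k\<le>K. S $ k * u^k)) \<in> o[at_right 0](\<lambda>u. u^K)"
      using ex_exK[OF exs, of K] unfolding exK_def .
    have "exK K (\<lambda>u. M (p u) (q u)) S"
      unfolding exK_def using smallo_add[OF h4 h5] by simp
    moreover have "S $ k = Abs_fps (\<lambda>k. \<Sum>n\<le>k. a n * (D^(2*n) * C * inverse C ^(2*n)) $ k) $ k"
      if "k \<le> K" for k
    proof -
      have "S $ k = (\<Sum>n\<le>K. a n * (D^(2*n) * C * inverse C ^(2*n)) $ k)"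
        unfolding S_def fps_sum_nth by simp
      also have "\<dots> = (\<Sum>n\<le>k. a n * (D^(2*n) * C * inverse C ^(2*n)) $ k)"
      proof (rule sum.mono_neutral_right)
        show "\<forall>n\<in>{..K} - {..k}. a n * (D ^ (2 * n) * C * inverse C ^ (2 * n)) $ k = 0"
        proof
          fix n assume "n \<in> {..K} - {..k}"
          hence "k < 2 * n" by auto
          thus "a n * (D ^ (2 * n) * C * inverse C ^ (2 * n)) $ k = 0"
            using pow_low_zero[OF D0, of k "2*n" "C * inverse C ^ (2*n)"] by (simp add: mult.assoc)
        qed
      qed (use that in auto)
      finally show ?thesis by simp
    qed
    ultimately show "exK K (\<lambda>u. M (p u) (q u)) (Abs_fps (\<lambda>k. \<Sum>n\<le>k. a n * (D^(2*n) * C * inverse C ^(2*n)) $ k))"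
      by (rule exK_cong_coeff[rotated])
  qed
qed


lemma scale_lemma:
  fixes D C :: "real fps" assumes "c \<noteq> 0"
  shows "(fps_const c * D)^(2*n) * (fps_const c * C) * inverse (fps_const c * C)^(2*n)
       = fps_const c * (D^(2*n) * C * inverse C^(2*n))"
proof -
  have "(fps_const c * D)^(2*n) * (fps_const c * C) * inverse (fps_const c * C)^(2*n)
     = fps_const (c^(2*n) * c * inverse c ^(2*n)) * (D^(2*n) * C * inverse C^(2*n))"
    by (simp add: power_mult_distrib fps_inverse_mult fps_const_inverse mult_ac)
  also have "c^(2*n) * c * inverse c ^(2*n) = c" using assms by (simp add: power_inverse field_simps)
  finally show ?thesis .
qed

lemma ev_nth: "((F::real fps) oo fps_X^2) $ k = (if even k then F $ (k div 2) else 0)"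
proof -
  have "((F::real fps) oo fps_X^2) $ k = (\<Sum>i=0..k. F $ i * (if k = 2*i then 1 else 0))"
    unfolding fps_compose_nth by (simp add: power_mult[symmetric])
  also have "\<dots> = (\<Sum>i\<in>{0..k}. if i = k div 2 \<and> even k then F $ i else 0)"
    by (intro sum.cong refl) auto
  also have "\<dots> = (if even k then F $ (k div 2) else 0)"
    by (cases "even k") (simp_all add: sum.delta')
  finally show ?thesis .
qed

lemma neg_nth: "((F::real fps) oo - fps_X) $ k = (-1)^k * F $ k"
  by (simp add: fps_compose_uminus')

lemma compose_Q:
  fixes D C c :: "real fps" assumes c0: "c $ 0 = 0" and C0: "C $ 0 \<noteq> 0"
  shows "(D^m * C * inverse C^m) oo c = (D oo c)^m * (C oo c) * inverse (C oo c)^m"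
  by (simp only: fps_compose_mult_distrib[OF c0] fps_compose_power[OF c0, symmetric] fps_inverse_compose[OF c0 C0])

lemma pw_alt:
  fixes C :: "real fps" assumes "C $ 0 \<noteq> 0"
  shows "pw C (1 - 2 * int n) = C * inverse C ^ (2*n)"
proof (cases n)
  case 0 thus ?thesis by (simp add: pw_def)
next
  case (Suc k)
  have CI: "C * inverse C = 1" using assms by (rule inverse_mult_eq_1')
  have "C * inverse C ^ (2*n) = (C * inverse C) * inverse C ^ (2*k+1)"
    using Suc by (simp add: mult_ac)
  also have "\<dots> = inverse C ^ (2*k+1)" by (simp only: CI mult_1_left)
  finally have A: "C * inverse C ^ (2*n) = inverse C ^ (2*k+1)" .
  have "nat (- (1 - 2 * int n)) = 2*k+1" using Suc by simp
  moreover have "\<not> (1 - 2 * int n \<ge> 0)" using Suc by simp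
  ultimately have "pw C (1 - 2 * int n) = inverse C ^ (2*k+1)" unfolding pw_def by simp
  thus ?thesis using A by simp
qed

lemma conv_pw:
  assumes b0: "b 0 > 0" and c0: "c 0 > 0"
  shows "(\<Sum>k\<le>j. P k (2 * real n) b * P (j - k) (- 2 * real n + 1) c) =
         (Abs_fps b ^ (2*n) * (Abs_fps c * inverse (Abs_fps c) ^ (2*n))) $ j"
proof -
  have r1: "2 * real n = real_of_int (int (2*n))" by simp
  have r2: "- 2 * real n + 1 = real_of_int (1 - 2 * int n)" by simp
  have e1: "P k (2 * real n) b = (Abs_fps b ^ (2*n)) $ k" for k
  proof -
    have "nat (int (2*n)) = 2*n" by simp
    thus ?thesis unfolding r1 P_pw[where b=b, OF b0] pw_def by (simp only: of_nat_0_le_iff if_True)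
  qed
  have e2: "P k (- 2 * real n + 1) c = (Abs_fps c * inverse (Abs_fps c) ^ (2*n)) $ k" for k
    unfolding r2 P_pw[where b=c, OF c0] using pw_alt[of "Abs_fps c" n] c0 by simp
  show ?thesis unfolding e1 e2 fps_mult_nth atLeast0AtMost ..
qed


lemma a0_eq_1:
  fixes M :: "real \<Rightarrow> real \<Rightarrow> real" and a :: "nat \<Rightarrow> real"
  assumes mean: "is_mean M" and ex: "has_sym_asymp_expansion M a"
  shows "a 0 = 1"
proof (rule ccontr)
  assume ne: "a 0 \<noteq> 1"
  have h: "(\<lambda>x. M (x - 0) (x + 0) - (\<Sum>n\<le>0. a n * 0 ^ (2 * n) * x powr (1 - 2 * real n)))
      \<in> o[at_top](\<lambda>x. x powr (1 - 2 * real 0))"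
    using ex unfolding has_sym_asymp_expansion_def by blast
  have ev1: "eventually (\<lambda>x::real. M (x - 0) (x + 0) - (\<Sum>n\<le>0. a n * 0 ^ (2 * n) * x powr (1 - 2 * real n))
      = (1 - a 0) * x) at_top"
    using eventually_gt_at_top[of 0]
  proof eventually_elim
    case (elim x)
    have "M x x = x" using mean elim unfolding is_mean_def by (metis min.idem max.idem order.antisym)
    thus ?case using elim by (simp add: algebra_simps)
  qed
  have ev2: "eventually (\<lambda>x::real. x powr (1 - 2 * real 0) = x) at_top"
    using eventually_gt_at_top[of 0] by eventually_elim simp
  have "(\<lambda>x::real. (1 - a 0) * x) \<in> o[at_top](\<lambda>x. x)"
    using h landau_o.small.in_cong[OF ev1] landau_o.small.cong[OF ev2] by simp
  hence "(\<lambda>x::real. x) \<in> o[at_top](\<lambda>x. x)" using ne by simp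
  hence "eventually (\<lambda>x::real. x = 0) at_top" by (simp add: landau_o.small_refl_iff)
  moreover have "eventually (\<lambda>x::real. x > 0) at_top" by (rule eventually_gt_at_top)
  ultimately have "eventually (\<lambda>x::real. False) at_top" by eventually_elim simp
  thus False by simp
qed

lemma powr_aux: assumes "(v::real) > 0" shows "v * inverse v powr (1 - 2 * real n) = v ^ (2*n)"
proof -
  have "v * inverse v powr (1 - 2 * real n) = v powr 1 / v powr (1 - 2 * real n)"
    using assms by (simp add: inverse_powr divide_inverse)
  also have "\<dots> = v powr (1 - (1 - 2 * real n))" by (simp add: powr_diff)
  also have "\<dots> = v powr (real (2*n))" by simp
  also have "\<dots> = v ^ (2*n)" using assms by (rule powr_realpow)
  finally show ?thesis .
qed

lemma hyp_conv:
  fixes M :: "real \<Rightarrow> real \<Rightarrow> real" and a :: "nat \<Rightarrow> real"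
  assumes hom: "homogeneous_mean M" and ex: "has_sym_asymp_expansion M a"
  shows "(\<lambda>v. M (1-v) (1+v) - (\<Sum>n\<le>N. a n * v^(2*n))) \<in> o[at_right 0](\<lambda>v. v^(2*N))"
proof -
  define g where "g = (\<lambda>x. M (x - 1) (x + 1) - (\<Sum>n\<le>N. a n * 1 ^ (2 * n) * x powr (1 - 2 * real n)))"
  have h: "g \<in> o[at_top](\<lambda>x. x powr (1 - 2 * real N))"
    using ex unfolding has_sym_asymp_expansion_def g_def by blast
  have h2: "(\<lambda>v. g (inverse v)) \<in> o[at_right 0](\<lambda>v. inverse v powr (1 - 2 * real N))"
    by (rule landau_o.small.compose[OF h filterlim_inverse_at_top_right])
  have h3: "(\<lambda>v. v * g (inverse v)) \<in> o[at_right 0](\<lambda>v. v * inverse v powr (1 - 2 * real N))"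
    using h2 by (rule landau_o.small.mult_left)
  have lt1: "eventually (\<lambda>v::real. v < 1) (at_right 0)"
    using order_tendstoD(2)[OF tendsto_ident_at[of "0::real" "{0<..}"], of 1] by simp
  have ev1: "eventually (\<lambda>v. v * g (inverse v) = M (1-v) (1+v) - (\<Sum>n\<le>N. a n * v^(2*n))) (at_right 0)"
    using ev_pos lt1
  proof eventually_elim
    case (elim v)
    have "v * M (inverse v - 1) (inverse v + 1) = M (v * (inverse v - 1)) (v * (inverse v + 1))"
    proof -
      have "inverse v - 1 > 0" "inverse v + 1 > 0" using elim by (simp_all add: one_less_inverse add_pos_pos)
      thus ?thesis using hom elim unfolding homogeneous_mean_def by simp
    qed
    also have "v * (inverse v - 1) = 1 - v" "v * (inverse v + 1) = 1 + v" using elim by (simp_all add: algebra_simps)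
    hence "M (v * (inverse v - 1)) (v * (inverse v + 1)) = M (1 - v) (1 + v)" by simp
    finally have A: "v * M (inverse v - 1) (inverse v + 1) = M (1 - v) (1 + v)" .
    have B: "v * (\<Sum>n\<le>N. a n * 1 ^ (2 * n) * inverse v powr (1 - 2 * real n)) = (\<Sum>n\<le>N. a n * v^(2*n))"
      unfolding sum_distrib_left
      by (intro sum.cong refl) (use powr_aux[OF elim(1)] in \<open>simp add: mult_ac\<close>)
    show ?case unfolding g_def using A B by (simp add: right_diff_distrib)
  qed
  have ev2: "eventually (\<lambda>v. v * inverse v powr (1 - 2 * real N) = v^(2*N)) (at_right 0)"
    using ev_pos by eventually_elim (rule powr_aux)
  show ?thesis
    using h3 landau_o.small.in_cong[OF ev1] landau_o.small.cong[OF ev2] by simp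
qed


definition Aser :: "(nat \<Rightarrow> real) \<Rightarrow> real fps" where
  "Aser a = Abs_fps (\<lambda>k. if even k then a (k div 2) else 0)"

definition convf :: "(nat \<Rightarrow> real) \<Rightarrow> (nat \<Rightarrow> real) \<Rightarrow> nat \<Rightarrow> nat \<Rightarrow> real" where
  "convf b c n j = (\<Sum>k\<le>j. P k (2 * real n) b * P (j - k) (- 2 * real n + 1) c)"

lemma ex_eq: "(\<And>u. f u = g u) \<Longrightarrow> ex f F \<Longrightarrow> ex g F"
proof -
  assume "\<And>u. f u = g u"
  hence "f = g" by auto
  thus "ex f F \<Longrightarrow> ex g F" by simp
qed

lemma even_sum: "(\<Sum>k\<le>2*N. Aser a $ k * v^k) = (\<Sum>n\<le>N. a n * v^(2*n))"
proof (induction N)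
  case 0 thus ?case by (simp add: Aser_def)
next
  case (Suc N)
  have "2 * Suc N = Suc (Suc (2*N))" by simp
  hence "(\<Sum>k\<le>2*Suc N. Aser a $ k * v^k) = (\<Sum>k\<le>2*N. Aser a $ k * v^k) + Aser a $ (Suc (2*N)) * v^(Suc (2*N))
     + Aser a $ (Suc (Suc (2*N))) * v^(Suc (Suc (2*N)))" by simp
  also have "\<dots> = (\<Sum>n\<le>N. a n * v^(2*n)) + a (Suc N) * v^(2 * Suc N)"
    using Suc by (simp add: Aser_def)
  finally show ?case by simp
qed

lemma exA:
  fixes M :: "real \<Rightarrow> real \<Rightarrow> real" and a :: "nat \<Rightarrow> real"
  assumes hom: "homogeneous_mean M" and ex: "has_sym_asymp_expansion M a"
  shows "ex (\<lambda>v. M (1-v) (1+v)) (Aser a)"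
  unfolding ex_def
proof
  fix K
  have "exK (2*K) (\<lambda>v. M (1-v) (1+v)) (Aser a)"
    unfolding exK_def even_sum using hyp_conv[OF hom ex] .
  thus "exK K (\<lambda>v. M (1-v) (1+v)) (Aser a)" by (rule exK_le) simp
qed

lemma conv_Z:
  fixes G H :: "real fps"
  shows "((fps_X * G)^(2*n) * H * inverse H^(2*n)) $ k =
    (if k < 2*n then 0 else (G^(2*n) * (H * inverse H^(2*n))) $ (k - 2*n))"
proof -
  have "(fps_X * G)^(2*n) * H * inverse H^(2*n) = fps_X^(2*n) * (G^(2*n) * (H * inverse H^(2*n)))"
    by (simp add: power_mult_distrib mult_ac)
  thus ?thesis by (simp only: fps_X_power_mult_nth)
qed

lemma XG: "a 0 = 1 \<Longrightarrow> fps_X * Abs_fps (seq_g a) = fps_X + Aser a - 1"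
proof (intro fps_ext)
  fix n assume a0: "a 0 = 1"
  show "(fps_X * Abs_fps (seq_g a)) $ n = (fps_X + Aser a - 1) $ n"
  proof (cases n)
    case 0 thus ?thesis using a0 by (simp add: Aser_def)
  next
    case (Suc k)
    thus ?thesis by (cases k) (auto simp: seq_g_def Aser_def)
  qed
qed

lemma Hid: "a 0 = 1 \<Longrightarrow> Abs_fps (seq_h a) = 1 - fps_X + Aser a"
proof (intro fps_ext)
  fix n assume a0: "a 0 = 1"
  show "Abs_fps (seq_h a) $ n = (1 - fps_X + Aser a) $ n"
    using a0 by (cases "n = 0"; cases "n = 1") (auto simp: seq_h_def Aser_def)
qed

lemma Aser_neg: "Aser a oo - fps_X = Aser a"
  by (intro fps_ext) (simp add: neg_nth Aser_def)


definition Zs :: "(nat \<Rightarrow> real) \<Rightarrow> nat \<Rightarrow> real fps" where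
  "Zs a n = (fps_X * Abs_fps (seq_g a))^(2*n) * Abs_fps (seq_h a) * inverse (Abs_fps (seq_h a))^(2*n)"

lemma mean_pos:
  fixes M :: "real \<Rightarrow> real \<Rightarrow> real"
  assumes mean: "is_mean M" and "s > 0" "t > 0" shows "M s t > 0"
proof -
  have "min s t \<le> M s t" using mean assms unfolding is_mean_def by blast
  moreover have "min s t > 0" using assms by simp
  ultimately show ?thesis by linarith
qed

lemma fM_pos:
  fixes M :: "real \<Rightarrow> real \<Rightarrow> real"
  assumes mean: "is_mean M" and u: "0 < u" "u < 1"
  shows "M (1-u) (1+u) > 0"
  using mean_pos[OF mean] u by simp

lemma lt1: "eventually (\<lambda>v::real. v < 1) (at_right 0)"
  using order_tendstoD(2)[OF tendsto_ident_at[of "0::real" "{0<..}"], of 1] by simp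

lemma ev01: "eventually (\<lambda>v::real. 0 < v \<and> v < 1) (at_right 0)"
  using ev_pos lt1 by eventually_elim simp

lemma inner1:
  fixes M :: "real \<Rightarrow> real \<Rightarrow> real" and a :: "nat \<Rightarrow> real"
  assumes mean: "is_mean M" and hom: "homogeneous_mean M" and exa: "has_sym_asymp_expansion M a"
    and a0: "a 0 = 1"
  shows "ex (\<lambda>u. M (1-u) (M (1-u) (1+u))) (Abs_fps (\<lambda>k. \<Sum>n\<le>k. a n * (1/2 * Zs a n $ k)))"
proof -
  define G where "G = Abs_fps (seq_g a)"
  define H where "H = Abs_fps (seq_h a)"
  have eA: "ex (\<lambda>v. M (1-v) (1+v)) (Aser a)" by (rule exA[OF hom exa])
  have e1: "ex (\<lambda>u. u + M (1-u) (1+u) - 1) (fps_X + Aser a - 1)"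
    using ex_diff[OF ex_add[OF ex_X eA] ex_const[of 1]] by simp
  have e2: "ex (\<lambda>u. 1 - u + M (1-u) (1+u)) (1 - fps_X + Aser a)"
    using ex_add[OF ex_diff[OF ex_const[of 1] ex_X] eA] by simp
  have exD: "ex (\<lambda>u. (M (1-u) (1+u) - (1 - u))/2) (fps_const (1/2) * (fps_X * G))"
    unfolding G_def XG[where a=a, OF a0] by (rule ex_eq[OF _ ex_cmult[OF e1]]) (simp add: field_simps)
  have exC: "ex (\<lambda>u. (M (1-u) (1+u) + (1 - u))/2) (fps_const (1/2) * H)"
    unfolding H_def Hid[where a=a, OF a0] by (rule ex_eq[OF _ ex_cmult[OF e2]]) (simp add: field_simps)
  have pos: "eventually (\<lambda>u. 1 - u > 0 \<and> M (1-u) (1+u) > 0) (at_right 0)"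
    using ev01 by eventually_elim (use fM_pos[OF mean] in auto)
  have D0: "(fps_const (1/2) * (fps_X * G)) $ 0 = 0" by simp
  have D1: "(fps_const (1/2) * (fps_X * G)) $ 1 > 0" by (simp add: G_def seq_g_def)
  have C0: "(fps_const (1/2) * H) $ 0 > 0" by (simp add: H_def seq_h_def)
  from Mgen[OF hom hyp_conv[OF hom exa] pos exD exC D0 D1 C0]
  have "ex (\<lambda>u. M (1-u) (M (1-u) (1+u)))
     (Abs_fps (\<lambda>k. \<Sum>n\<le>k. a n * ((fps_const (1/2) * (fps_X * G))^(2*n) * (fps_const (1/2) * H) * inverse (fps_const (1/2) * H) ^(2*n)) $ k))" .
  moreover have "(fps_const (1/2) * (fps_X * G))^(2*n) * (fps_const (1/2) * H) * inverse (fps_const (1/2) * H) ^(2*n)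
     = fps_const (1/2) * Zs a n" for n
    unfolding Zs_def G_def H_def by (rule scale_lemma) simp
  ultimately show ?thesis by simp
qed

lemma compose_XG: "a 0 = 1 \<Longrightarrow> - ((fps_X * Abs_fps (seq_g a)) oo - fps_X) = 1 + fps_X - Aser a"
  by (simp add: XG fps_compose_add_distrib fps_compose_sub_distrib Aser_neg)

lemma compose_H: "a 0 = 1 \<Longrightarrow> Abs_fps (seq_h a) oo - fps_X = 1 + fps_X + Aser a"
  by (simp add: Hid fps_compose_add_distrib fps_compose_sub_distrib Aser_neg)

lemma inner2:
  fixes M :: "real \<Rightarrow> real \<Rightarrow> real" and a :: "nat \<Rightarrow> real"
  assumes mean: "is_mean M" and hom: "homogeneous_mean M" and exa: "has_sym_asymp_expansion M a"
    and a0: "a 0 = 1"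
  shows "ex (\<lambda>u. M (M (1-u) (1+u)) (1+u)) (Abs_fps (\<lambda>k. \<Sum>n\<le>k. a n * (1/2 * ((-1)^k * Zs a n $ k))))"
proof -
  define G where "G = Abs_fps (seq_g a)"
  define H where "H = Abs_fps (seq_h a)"
  define c :: "real fps" where "c = - fps_X"
  have c0: "c $ 0 = 0" by (simp add: c_def)
  have H0: "H $ 0 \<noteq> 0" by (simp add: H_def seq_h_def)
  have eA: "ex (\<lambda>v. M (1-v) (1+v)) (Aser a)" by (rule exA[OF hom exa])
  have e1: "ex (\<lambda>u. 1 + u - M (1-u) (1+u)) (1 + fps_X - Aser a)"
    using ex_diff[OF ex_add[OF ex_const[of 1] ex_X] eA] by simp
  have e2: "ex (\<lambda>u. 1 + u + M (1-u) (1+u)) (1 + fps_X + Aser a)"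
    using ex_add[OF ex_add[OF ex_const[of 1] ex_X] eA] by simp
  have exD: "ex (\<lambda>u. ((1 + u) - M (1-u) (1+u))/2) (fps_const (1/2) * (- ((fps_X * G) oo c)))"
    unfolding G_def c_def compose_XG[where a=a, OF a0] by (rule ex_eq[OF _ ex_cmult[OF e1]]) (simp add: field_simps)
  have exC: "ex (\<lambda>u. ((1 + u) + M (1-u) (1+u))/2) (fps_const (1/2) * (H oo c))"
    unfolding H_def c_def compose_H[where a=a, OF a0] by (rule ex_eq[OF _ ex_cmult[OF e2]]) (simp add: field_simps)
  have pos: "eventually (\<lambda>u. M (1-u) (1+u) > 0 \<and> 1 + u > 0) (at_right 0)"
    using ev01 by eventually_elim (use fM_pos[OF mean] in auto)
  have D0: "(fps_const (1/2) * (- ((fps_X * G) oo c))) $ 0 = 0" by (simp add: c_def)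
  have D1: "(fps_const (1/2) * (- ((fps_X * G) oo c))) $ 1 > 0"
    unfolding c_def neg_nth[unfolded neg_nth] by (simp add: G_def seq_g_def neg_nth del: fps_X_mult_nth) 
  have C0: "(fps_const (1/2) * (H oo c)) $ 0 > 0" by (simp add: H_def seq_h_def)
  from Mgen[OF hom hyp_conv[OF hom exa] pos exD exC D0 D1 C0]
  have A: "ex (\<lambda>u. M (M (1-u) (1+u)) (1+u))
     (Abs_fps (\<lambda>k. \<Sum>n\<le>k. a n * ((fps_const (1/2) * (- ((fps_X * G) oo c)))^(2*n) * (fps_const (1/2) * (H oo c)) * inverse (fps_const (1/2) * (H oo c)) ^(2*n)) $ k))" .
  have Zs_GH: "Zs a n = (fps_X * G)^(2*n) * H * inverse H^(2*n)" for n by (simp add: Zs_def G_def H_def)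
  have B: "(fps_const (1/2) * (- ((fps_X * G) oo c)))^(2*n) * (fps_const (1/2) * (H oo c)) * inverse (fps_const (1/2) * (H oo c)) ^(2*n)
    = fps_const (1/2) * (Zs a n oo c)" for n
  proof -
    have "(fps_const (1/2) * (- ((fps_X * G) oo c)))^(2*n) * (fps_const (1/2) * (H oo c)) * inverse (fps_const (1/2) * (H oo c)) ^(2*n)
      = fps_const (1/2) * ((- ((fps_X * G) oo c))^(2*n) * (H oo c) * inverse (H oo c)^(2*n))"
      by (rule scale_lemma) simp
    also have "(- ((fps_X * G) oo c))^(2*n) = ((fps_X * G) oo c)^(2*n)" by simp
    also have "((fps_X * G) oo c)^(2*n) * (H oo c) * inverse (H oo c)^(2*n) = Zs a n oo c"
      unfolding Zs_GH by (rule compose_Q[OF c0 H0, symmetric])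
    finally show ?thesis .
  qed
  show ?thesis using A unfolding B by (simp add: c_def neg_nth)
qed


lemma convf_fps:
  assumes "b 0 > 0" "c 0 > 0"
  shows "convf b c n j = (Abs_fps b ^ (2*n) * Abs_fps c * inverse (Abs_fps c) ^ (2*n)) $ j"
  unfolding convf_def conv_pw[where b=b and c=c, OF assms] by (simp add: mult.assoc)

lemma convf0: assumes "b 0 > 0" "c 0 > 0" shows "convf b c 0 j = c j"
  using convf_fps[where b=b and c=c and n=0 and j=j, OF assms] by simp

lemma convf_at0: "convf b c n 0 = b 0 powr (2 * real n) * c 0 powr (- 2 * real n + 1)"
  by (simp add: convf_def)

lemma g0: "seq_g a 0 = 1" and h0: "seq_h a 0 = 2" and h1: "seq_h a 1 = -1"
  by (simp_all add: seq_g_def seq_h_def)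

lemma Zs_nth: "Zs a n $ k = (if k < 2*n then 0 else convf (seq_g a) (seq_h a) n (k - 2*n))"
proof -
  have "convf (seq_g a) (seq_h a) n j = (Abs_fps (seq_g a) ^ (2*n) * (Abs_fps (seq_h a) * inverse (Abs_fps (seq_h a)) ^ (2*n))) $ j" for j
    using convf_fps[of "seq_g a" "seq_h a" n j] by (simp add: g0 h0 mult.assoc)
  thus ?thesis unfolding Zs_def conv_Z by simp
qed

definition T1 :: "(nat \<Rightarrow> real) \<Rightarrow> real fps" where
  "T1 a = Abs_fps (\<lambda>k. \<Sum>n\<le>k. a n * (1/2 * Zs a n $ k))"

lemma T1_nth: "T1 a $ k = 1/2 * (\<Sum>n\<le>k div 2. a n * convf (seq_g a) (seq_h a) n (k - 2*n))"
proof -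
  have "T1 a $ k = (\<Sum>n\<le>k. a n * (1/2 * Zs a n $ k))" by (simp add: T1_def)
  also have "\<dots> = (\<Sum>n\<le>k div 2. a n * (1/2 * Zs a n $ k))"
    by (rule sum.mono_neutral_right) (auto simp: Zs_nth)
  also have "\<dots> = 1/2 * (\<Sum>n\<le>k div 2. a n * convf (seq_g a) (seq_h a) n (k - 2*n))"
    unfolding sum_distrib_left by (intro sum.cong refl) (auto simp: Zs_nth)
  finally show ?thesis .
qed

lemma T1_even: "T1 a $ (2*m) = seq_s a m"
  unfolding T1_nth seq_s_def convf_def by simp

lemma T1_odd: "T1 a $ (2*m+1) = - seq_d a m"
proof -
  have "(2*m+1) div 2 = m" by simp
  thus ?thesis unfolding T1_nth seq_d_def convf_def by simp
qed

lemma s0: "a 0 = 1 \<Longrightarrow> seq_s a 0 = 1"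
  unfolding T1_even[of a 0, symmetric] T1_nth using convf0[of "seq_g a" "seq_h a" 0] by (simp add: g0 h0)

lemma d0: "a 0 = 1 \<Longrightarrow> seq_d a 0 = 1/2"
proof -
  assume a0: "a 0 = 1"
  have "- seq_d a 0 = T1 a $ 1" using T1_odd[of a 0] by simp
  also have "\<dots> = -1/2" unfolding T1_nth using convf0[of "seq_g a" "seq_h a" 1] a0 by (simp add: g0 h0 seq_h_def)
  finally show ?thesis by simp
qed


lemma outer:
  fixes M :: "real \<Rightarrow> real \<Rightarrow> real" and a :: "nat \<Rightarrow> real"
  assumes mean: "is_mean M" and hom: "homogeneous_mean M" and stab: "stable_mean M"
    and exa: "has_sym_asymp_expansion M a" and a0: "a 0 = 1"
  shows "a m = (\<Sum>n\<le>m. a n * convf (seq_d a) (seq_s a) n (m - n))"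
proof -
  define T2 where "T2 = Abs_fps (\<lambda>k. \<Sum>n\<le>k. a n * (1/2 * ((-1)^k * Zs a n $ k)))"
  have T2n: "T2 $ k = (-1)^k * T1 a $ k" for k
    unfolding T2_def T1_def by (simp add: sum_distrib_left mult_ac)
  define I1 where "I1 = (\<lambda>u. M (1-u) (M (1-u) (1+u)))"
  define I2 where "I2 = (\<lambda>u. M (M (1-u) (1+u)) (1+u))"
  have e1: "ex I1 (T1 a)" unfolding I1_def T1_def by (rule inner1[OF mean hom exa a0])
  have e2: "ex I2 T2" unfolding I2_def T2_def by (rule inner2[OF mean hom exa a0])
  define Dd where "Dd = Abs_fps (seq_d a)"
  define S where "S = Abs_fps (seq_s a)"
  define D3 where "D3 = fps_const (1/2) * (T2 - T1 a)"
  define C3 where "C3 = fps_const (1/2) * (T2 + T1 a)"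
  have exD: "ex (\<lambda>u. (I2 u - I1 u)/2) D3"
    unfolding D3_def by (rule ex_eq[OF _ ex_cmult[OF ex_diff[OF e2 e1]]]) simp
  have exC: "ex (\<lambda>u. (I2 u + I1 u)/2) C3"
    unfolding C3_def by (rule ex_eq[OF _ ex_cmult[OF ex_add[OF e2 e1]]]) simp
  have pos: "eventually (\<lambda>u. I1 u > 0 \<and> I2 u > 0) (at_right 0)"
    using ev01
  proof eventually_elim
    case (elim u)
    hence f: "M (1-u) (1+u) > 0" using fM_pos[OF mean] by auto
    show ?case unfolding I1_def I2_def using elim f by (auto intro!: mean_pos[OF mean])
  qed
  have T10: "T1 a $ 0 = 1" using T1_even[of a 0] s0[where a=a, OF a0] by simp
  have T11: "T1 a $ Suc 0 = - 1/2" using T1_odd[of a 0] d0[where a=a, OF a0] by simp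
  have D0: "D3 $ 0 = 0" by (simp add: D3_def T2n)
  have D1: "D3 $ 1 > 0" by (simp add: D3_def T2n T11)
  have C0: "C3 $ 0 > 0" by (simp add: C3_def T2n T10)
  have D3eq: "D3 = fps_X * (Dd oo fps_X^2)"
  proof (intro fps_ext)
    fix k
    show "D3 $ k = (fps_X * (Dd oo fps_X^2)) $ k"
    proof (cases "even k")
      case True thus ?thesis by (auto simp: D3_def T2n ev_nth)
    next
      case False
      then obtain m where k: "k = 2*m+1" using oddE by blast
      show ?thesis unfolding k using T1_odd[of a m] by (simp add: D3_def T2n ev_nth Dd_def)
    qed
  qed
  have C3eq: "C3 = S oo fps_X^2"
  proof (intro fps_ext)
    fix k
    show "C3 $ k = (S oo fps_X^2) $ k"
    proof (cases "even k")
      case True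
      then obtain m where k: "k = 2*m" by blast
      show ?thesis unfolding k using T1_even[of a m] by (simp add: C3_def T2n ev_nth S_def)
    next
      case False thus ?thesis by (simp add: C3_def T2n ev_nth)
    qed
  qed
  have S0: "S $ 0 \<noteq> 0" using s0[where a=a, OF a0] by (simp add: S_def)
  have c0: "(fps_X^2 :: real fps) $ 0 = 0" by simp
  have Q3: "D3^(2*n) * C3 * inverse C3^(2*n) = fps_X^(2*n) * ((Dd^(2*n) * S * inverse S^(2*n)) oo fps_X^2)" for n
  proof -
    have "D3^(2*n) * C3 * inverse C3^(2*n) = fps_X^(2*n) * ((Dd oo fps_X^2)^(2*n) * (S oo fps_X^2) * inverse (S oo fps_X^2)^(2*n))"
      unfolding D3eq C3eq by (simp add: power_mult_distrib mult_ac)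
    also have "(Dd oo fps_X^2)^(2*n) * (S oo fps_X^2) * inverse (S oo fps_X^2)^(2*n) = (Dd^(2*n) * S * inverse S^(2*n)) oo fps_X^2"
      by (rule compose_Q[OF c0 S0, symmetric])
    finally show ?thesis .
  qed
  have stab': "eventually (\<lambda>u. M (I1 u) (I2 u) = M (1-u) (1+u)) (at_right 0)"
    using ev01
  proof eventually_elim
    case (elim u)
    thus ?case using stab unfolding stable_mean_def I1_def I2_def by (metis add_pos_pos diff_gt_0_iff_gt zero_less_one)
  qed
  from Mgen[OF hom hyp_conv[OF hom exa] pos exD exC D0 D1 C0]
  have "ex (\<lambda>u. M (I1 u) (I2 u)) (Abs_fps (\<lambda>k. \<Sum>n\<le>k. a n * (D3^(2*n) * C3 * inverse C3 ^(2*n)) $ k))" .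
  hence "ex (\<lambda>u. M (1-u) (1+u)) (Abs_fps (\<lambda>k. \<Sum>n\<le>k. a n * (D3^(2*n) * C3 * inverse C3 ^(2*n)) $ k))"
    by (rule ex_cong_fun[OF stab'])
  from ex_unique[OF exA[OF hom exa] this]
  have AT: "Aser a = Abs_fps (\<lambda>k. \<Sum>n\<le>k. a n * (D3^(2*n) * C3 * inverse C3 ^(2*n)) $ k)" .
  have "a m = Aser a $ (2*m)" by (simp add: Aser_def)
  also have "\<dots> = (\<Sum>n\<le>2*m. a n * (D3^(2*n) * C3 * inverse C3 ^(2*n)) $ (2*m))"
    by (subst AT) simp
  also have "\<dots> = (\<Sum>n\<le>m. a n * (D3^(2*n) * C3 * inverse C3 ^(2*n)) $ (2*m))"
    by (rule sum.mono_neutral_right) (auto simp: Q3 fps_X_power_mult_nth)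
  also have "\<dots> = (\<Sum>n\<le>m. a n * convf (seq_d a) (seq_s a) n (m - n))"
  proof (intro sum.cong refl)
    fix n assume n: "n \<in> {..m}"
    have cf: "convf (seq_d a) (seq_s a) n j = (Dd^(2*n) * S * inverse S^(2*n)) $ j" for j
      unfolding Dd_def S_def by (rule convf_fps) (use d0[where a=a, OF a0] s0[where a=a, OF a0] in auto)
    have "(2*m - 2*n) div 2 = m - n" by simp
    thus "a n * (D3^(2*n) * C3 * inverse C3 ^(2*n)) $ (2*m) = a n * convf (seq_d a) (seq_s a) n (m - n)"
      using n by (simp add: Q3 fps_X_power_mult_nth ev_nth cf)
  qed
  finally show ?thesis .
qed


lemma split_sum: assumes "1 \<le> (m::nat)" shows "(\<Sum>n\<le>m. f n) = f 0 + (\<Sum>n\<in>{1..m-1}. f n) + (f m :: real)"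
proof -
  have "(\<Sum>n\<le>m. f n) = (\<Sum>n\<in>{0..m}. f n)" by (simp add: atLeast0AtMost)
  also have "\<dots> = f 0 + (\<Sum>n\<in>{Suc 0..m}. f n)" by (rule sum.atLeast_Suc_atMost) simp
  also have "{Suc 0..m} = insert m {1..m-1}" using assms by auto
  also have "(\<Sum>n\<in>insert m {1..m-1}. f n) = f m + (\<Sum>n\<in>{1..m-1}. f n)" using assms by (subst sum.insert) auto
  finally show ?thesis by simp
qed

theorem theorem3p2:
  fixes M :: "real \<Rightarrow> real \<Rightarrow> real" and a :: "nat \<Rightarrow> real"
  assumes "is_mean M" and "symmetric_mean M" and "homogeneous_mean M" and "stable_mean M"
    and "has_sym_asymp_expansion M a"
  shows "a 0 = 1 \<and>
    (\<forall>m\<ge>2. a m = 2 ^ (2*m - 1) / (2 ^ (2*m - 2) - 1) *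
       ((1/2) * (\<Sum>n\<in>{1..m-1}. a n * (\<Sum>k\<le>2*m-2*n.
            P k (2 * real n) (seq_g a) * P (2*m-2*n-k) (- 2 * real n + 1) (seq_h a)))
        + (\<Sum>n\<in>{1..m-1}. a n * (\<Sum>k\<le>m-n.
            P k (2 * real n) (seq_d a) * P (m-n-k) (- 2 * real n + 1) (seq_s a)))))"
proof -
  note mean = assms(1) and hom = assms(3) and stab = assms(4) and exa = assms(5)
  have a0: "a 0 = 1" by (rule a0_eq_1[OF mean exa])
  have "a m = 2 ^ (2*m - 1) / (2 ^ (2*m - 2) - 1) *
       ((1/2) * (\<Sum>n\<in>{1..m-1}. a n * convf (seq_g a) (seq_h a) n (2*m-2*n))
        + (\<Sum>n\<in>{1..m-1}. a n * convf (seq_d a) (seq_s a) n (m-n)))" if m2: "m \<ge> 2" for m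
  proof -
    define X1 where "X1 = (\<Sum>n\<in>{1..m-1}. a n * convf (seq_g a) (seq_h a) n (2*m-2*n))"
    define X2 where "X2 = (\<Sum>n\<in>{1..m-1}. a n * convf (seq_d a) (seq_s a) n (m-n))"
    define y :: real where "y = 2 ^ (2*m - 2)"
    have y1: "y > 1" using m2 unfolding y_def by (intro one_less_power) auto
    have p4: "(2::real) ^ (2*m) = 4 * y"
    proof -
      have e: "2*m - 2 + 2 = 2*m" using m2 by simp
      have "(2::real) ^ (2*m) = 2 ^ (2*m - 2 + 2)" by (simp only: e)
      also have "\<dots> = 2 ^ (2*m - 2) * 4" by (simp add: power_add)
      finally show ?thesis unfolding y_def by simp
    qed
    have p2: "(2::real) ^ (2*m - 1) = 2 * y"
    proof -
      have "2*m - 1 = Suc (2*m - 2)" using m2 by simp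
      thus ?thesis unfolding y_def by simp
    qed
    have d0': "seq_d a 0 = 1/2" by (rule d0[where a=a, OF a0])
    have s0': "seq_s a 0 = 1" by (rule s0[where a=a, OF a0])
    have q1: "convf (seq_d a) (seq_s a) m 0 = 1 / (4 * y)"
    proof -
      have "convf (seq_d a) (seq_s a) m 0 = (1/2) powr (real (2*m))"
        by (simp add: convf_at0 d0' s0')
      also have "\<dots> = (1/2) ^ (2*m)" by (rule powr_realpow) simp
      finally show ?thesis using p4 by (simp add: power_divide)
    qed
    have q2: "convf (seq_g a) (seq_h a) m 0 = 1 / (2 * y)"
    proof -
      have "convf (seq_g a) (seq_h a) m 0 = 2 powr (1 - real (2*m))"
        by (simp add: convf_at0 g0 h0)
      also have "\<dots> = 2 powr 1 / 2 powr real (2*m)" by (rule powr_diff)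
      also have "(2::real) powr real (2*m) = 2 ^ (2*m)" by (rule powr_realpow) simp
      also have "(2::real) powr 1 = 2" by simp
      finally show ?thesis using p4 by simp
    qed
    have q3: "convf (seq_d a) (seq_s a) 0 m = seq_s a m"
      by (rule convf0) (simp_all add: d0' s0')
    have q4: "convf (seq_g a) (seq_h a) 0 (2*m) = a m"
      using convf0[of "seq_g a" "seq_h a" "2*m"] m2 by (simp add: g0 h0 seq_h_def)
    have E1: "a m = seq_s a m + X2 + a m / (4 * y)"
      using outer[OF mean hom stab exa a0, of m] split_sum[of m] m2 unfolding X2_def
      by (simp add: q1 q3 a0)
    have E2: "seq_s a m = 1/2 * (a m + X1 + a m / (2 * y))"
    proof -
      have "seq_s a m = T1 a $ (2*m)" by (rule T1_even[symmetric])
      also have "\<dots> = 1/2 * (\<Sum>n\<le>m. a n * convf (seq_g a) (seq_h a) n (2*m - 2*n))"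
        unfolding T1_nth by simp
      also have "\<dots> = 1/2 * (a m + X1 + a m / (2 * y))"
        using split_sum[of m "\<lambda>n. a n * convf (seq_g a) (seq_h a) n (2*m - 2*n)"] m2 unfolding X1_def
        by (simp add: q2 q4 a0)
      finally show ?thesis .
    qed
    have "a m * (y - 1) = y * X1 + 2 * y * X2"
      using E1 E2 y1 by (simp add: field_simps)
    hence "a m = 2 * y / (y - 1) * (1/2 * X1 + X2)"
      using y1 by (simp add: field_simps)
    thus ?thesis unfolding p2 y_def X1_def X2_def by simp
  qed
  thus ?thesis using a0 unfolding convf_def by simp
qed


end
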